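(* Let $\lambda\supseteq\mu$ be partitions and $T$ a Dyck tiling of $\lambda\setminus\mu$. Then: (1) $T$ is left-cover-expansive if and only if for every tile $t$ of $T$, $\mathtt{NW}(\operatorname{st}t)\notin\lambda\setminus\mu$; (2) $T$ is right-cover-expansive if and only if for every tile $t$ of $T$, $\mathtt{NE}(\operatorname{en}t)\notin\lambda\setminus\mu$.
   Context: Partitions are identified with Young diagrams $\{(a,b)\in\mathbb N^2:b\le\lambda_a\}$; nodes are elements of $\mathbb N^2$; $(a,b)$ has height $a+b$ and lies in column $b-a$ (smaller column = further left). $\mathtt{NE}(\mathfrak n)=\mathfrak n+(0,1)$, $\mathtt{SW}(\mathfrak n)=\mathfrak n-(0,1)$, $\mathtt{NW}(\mathfrak n)=\mathfrak n+(1,0)$, $\mathtt{SE}(\mathfrak n)=\mathfrak n-(1,0)$. A tile is a finite nonempty set of nodes orderable $\mathfrak n_1,\dots,\mathfrak n_r$ with $\mathfrak n_{i+1}\in\{\mathtt{NE}(\mathfrak n_i),\mathtt{SE}(\mathfrak n_i)\}$; $\operatorname{st}t$ is its leftmost node and $\operatorname{en}t$ its rightmost node; it is a Dyck tile if $\operatorname{st}t,\operatorname{en}t$ both attain the maximal height of nodes of $t$. A Dyck tiling of $\lambda\setminus\mu$ is a partition of $\lambda\setminus\mu$ into Dyck tiles; $\operatorname{tile}(\mathfrak n)$ is the tile containing $\mathfrak n$. The tiling is left-cover-expansive if whenever $\mathfrak a,\mathtt{SE}(\mathfrak a)\in\lambda\setminus\mu$, $\operatorname{st}(\operatorname{tile}(\mathtt{SE}(\mathfrak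 a)))$ lies weakly to the left of $\operatorname{st}(\operatorname{tile}(\mathfrak a))$; right-cover-expansive if whenever $\mathfrak a,\mathtt{SW}(\mathfrak a)\in\lambda\setminus\mu$, $\operatorname{en}(\operatorname{tile}(\mathtt{SW}(\mathfrak a)))$ lies weakly to the right of $\operatorname{en}(\operatorname{tile}(\mathfrak a))$. *)

theory Defs
  imports Main
begin

text \<open>Nodes are pairs of integers (a,b); partitions (Young diagrams) are finite
  down-closed subsets of the positive quadrant {(a,b). a \<ge> 1, b \<ge> 1},
  i.e. {(a,b). 1 \<le> b \<le> lambda_a}.\<close>

type_synonym node = "int \<times> int"

definition is_partition :: "node set \<Rightarrow> bool" where
  "is_partition P \<longleftrightarrow> finite P \<and> P \<subseteq> {(a, b). a \<ge> 1 \<and> b \<ge> 1} \<and>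
     (\<forall>a b a' b'. (a, b) \<in> P \<and> 1 \<le> a' \<and> a' \<le> a \<and> 1 \<le> b' \<and> b' \<le> b \<longrightarrow> (a', b') \<in> P)"

definition height :: "node \<Rightarrow> int" where
  "height n = fst n + snd n"

definition col :: "node \<Rightarrow> int" where
  "col n = snd n - fst n"

definition NE :: "node \<Rightarrow> node" where "NE n = (fst n, snd n + 1)"
definition SW :: "node \<Rightarrow> node" where "SW n = (fst n, snd n - 1)"
definition NW :: "node \<Rightarrow> node" where "NW n = (fst n + 1, snd n)"
definition SE :: "node \<Rightarrow> node" where "SE n = (fst n - 1, snd n)"

definition is_tile :: "node set \<Rightarrow> bool" where
  "is_tile t \<longleftrightarrow> (\<exists>xs. xs \<noteq> [] \<and> set xs = t \<and>
      (\<forall>i. Suc i < length xs \<longrightarrow> xs ! Suc i \<in> {NE (xs ! i), SE (xs ! i)}))"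

text \<open>Leftmost / rightmost node of a tile (columns of nodes of a tile are distinct).\<close>
definition st :: "node set \<Rightarrow> node" where
  "st t = (THE n. n \<in> t \<and> (\<forall>m\<in>t. col n \<le> col m))"

definition en :: "node set \<Rightarrow> node" where
  "en t = (THE n. n \<in> t \<and> (\<forall>m\<in>t. col m \<le> col n))"

definition is_dyck_tile :: "node set \<Rightarrow> bool" where
  "is_dyck_tile t \<longleftrightarrow> is_tile t \<and>
     height (st t) = Max (height ` t) \<and> height (en t) = Max (height ` t)"

definition is_dyck_tiling :: "node set set \<Rightarrow> node set \<Rightarrow> node set \<Rightarrow> bool" where
  "is_dyck_tiling T lam mu \<longleftrightarrow> \<Union>T = lam - mu \<and> (\<forall>t\<in>T. is_dyck_tile t) \<and>
     (\<forall>t\<in>T. \<forall>t'\<in>T. t \<noteq> t' \<longrightarrow> t \<inter> t' = {})"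

definition tile_of :: "node set set \<Rightarrow> node \<Rightarrow> node set" where
  "tile_of T n = (THE t. t \<in> T \<and> n \<in> t)"

definition left_cover_expansive :: "node set set \<Rightarrow> node set \<Rightarrow> node set \<Rightarrow> bool" where
  "left_cover_expansive T lam mu \<longleftrightarrow>
     (\<forall>a. a \<in> lam - mu \<and> SE a \<in> lam - mu \<longrightarrow>
        col (st (tile_of T (SE a))) \<le> col (st (tile_of T a)))"

definition right_cover_expansive :: "node set set \<Rightarrow> node set \<Rightarrow> node set \<Rightarrow> bool" where
  "right_cover_expansive T lam mu \<longleftrightarrow>
     (\<forall>a. a \<in> lam - mu \<and> SW a \<in> lam - mu \<longrightarrow>
        col (en (tile_of T a)) \<le> col (en (tile_of T (SW a))))"

end

theory Submission imports Defs begin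

lemma col_NE[simp]: "col (NE n) = col n + 1" and col_SE[simp]: "col (SE n) = col n + 1"
  by (auto simp: col_def NE_def SE_def)

lemma tile_props:
  assumes "is_tile t"
  shows "st t \<in> t" "en t \<in> t" "\<forall>m\<in>t. col (st t) \<le> col m" "\<forall>m\<in>t. col m \<le> col (en t)"
    "inj_on col t"
    "\<forall>n\<in>t. n \<noteq> st t \<longrightarrow> (\<exists>m\<in>t. n = NE m \<or> n = SE m)"
    "\<forall>n\<in>t. n \<noteq> en t \<longrightarrow> (\<exists>m\<in>t. m = NE n \<or> m = SE n)"
proof -
  obtain xs where ne: "xs \<noteq> []" and st: "set xs = t" and
    step: "\<forall>i. Suc i < length xs \<longrightarrow> xs ! Suc i \<in> {NE (xs ! i), SE (xs ! i)}"
    using assms unfolding is_tile_def by blast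
  have colx: "i < length xs \<Longrightarrow> col (xs!i) = col (xs!0) + int i" for i
  proof (induction i)
    case (Suc i)
    then have "xs ! Suc i \<in> {NE (xs ! i), SE (xs ! i)}" using step by blast
    then show ?case using Suc by auto
  qed simp
  have inj: "inj_on col t"
  proof (rule inj_onI)
    fix x y assume "x \<in> t" "y \<in> t" "col x = col y"
    then obtain i j where "i < length xs" "j < length xs" "x = xs!i" "y = xs!j"
      using st by (metis in_set_conv_nth)
    then show "x = y" using colx \<open>col x = col y\<close> by auto
  qed
  have x0: "xs!0 \<in> t" using ne st by auto
  have xl: "xs!(length xs - 1) \<in> t" using ne st by auto
  have min0: "\<forall>m\<in>t. col (xs!0) \<le> col m"
  proof
    fix m assume "m \<in> t"
    then obtain i where "i < length xs" "m = xs!i" using st by (metis in_set_conv_nth)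
    then show "col (xs!0) \<le> col m" using colx by simp
  qed
  have maxl: "\<forall>m\<in>t. col m \<le> col (xs!(length xs - 1))"
  proof
    fix m assume "m \<in> t"
    then obtain i where "i < length xs" "m = xs!i" using st by (metis in_set_conv_nth)
    then show "col m \<le> col (xs!(length xs - 1))" using colx[of i] colx[of "length xs - 1"] ne by simp
  qed
  have steq: "st t = xs!0"
    unfolding st_def
    apply (rule the_equality)
    using x0 min0 apply blast
    using x0 min0 inj by (meson antisym inj_onD)
  have eneq: "en t = xs!(length xs - 1)"
    unfolding en_def
    apply (rule the_equality)
    using xl maxl apply blast
    using xl maxl inj by (meson antisym inj_onD)
  show "st t \<in> t" "en t \<in> t" "\<forall>m\<in>t. col (st t) \<le> col m" "\<forall>m\<in>t. col m \<le> col (en t)"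
    "inj_on col t" using steq eneq x0 xl min0 maxl inj by auto
  show "\<forall>n\<in>t. n \<noteq> st t \<longrightarrow> (\<exists>m\<in>t. n = NE m \<or> n = SE m)"
  proof (intro ballI impI)
    fix n assume "n \<in> t" "n \<noteq> st t"
    then obtain i where i: "i < length xs" "n = xs!i" using st by (metis in_set_conv_nth)
    with \<open>n \<noteq> st t\<close> steq have "i \<noteq> 0" by metis
    then obtain j where j: "i = Suc j" by (cases i) auto
    have "xs!j \<in> t" using i j st by auto
    moreover have "n \<in> {NE (xs ! j), SE (xs ! j)}" using step i j by blast
    ultimately show "\<exists>m\<in>t. n = NE m \<or> n = SE m" by blast
  qed
  show "\<forall>n\<in>t. n \<noteq> en t \<longrightarrow> (\<exists>m\<in>t. m = NE n \<or> m = SE n)"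
  proof (intro ballI impI)
    fix n assume "n \<in> t" "n \<noteq> en t"
    then obtain i where i: "i < length xs" "n = xs!i" using st by (metis in_set_conv_nth)
    with \<open>n \<noteq> en t\<close> eneq have "Suc i < length xs" by (metis Suc_lessI diff_Suc_1)
    then have "xs!Suc i \<in> t" "xs ! Suc i \<in> {NE (xs ! i), SE (xs ! i)}" using step st by auto
    then show "\<exists>m\<in>t. m = NE n \<or> m = SE n" using i by blast
  qed
qed


lemma hNE[simp]: "height (NE n) = height n + 1" and hSE[simp]: "height (SE n) = height n - 1"
  by (auto simp: height_def NE_def SE_def)

lemma step_pair:
  assumes "col u = col v" "height v < height u" "u \<noteq> v"
    and "u' = NE u \<or> u' = SE u" "v' = NE v \<or> v' = SE v"
    and "u' \<noteq> v'"
  shows "height v' < height u'"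
  using assms
  by (cases u; cases v; auto simp: col_def height_def NE_def SE_def)

lemma step_pair2:
  assumes "col u' = col v'" "height v' < height u'" 
    and "u' = NE u \<or> u' = SE u" "v' = NE v \<or> v' = SE v"
    and "u \<noteq> v"
  shows "height v < height u"
  using assms
  by (cases u; cases v; auto simp: col_def height_def NE_def SE_def)

lemma noncross_left:
  assumes tt: "is_tile t" and ts: "is_tile s" and disj: "t \<inter> s = {}"
    and u: "u \<in> t" and v: "v \<in> s" and c: "col u = col v" and h: "height v < height u"
  shows "col (st t) \<le> col u - int k \<Longrightarrow> col (st s) \<le> col u - int k \<Longrightarrow>
    \<exists>u'\<in>t. \<exists>v'\<in>s. col u' = col u - int k \<and> col v' = col u - int k \<and> height v' < height u'"
proof (induction k)
  case 0 then show ?case using u v c h by auto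
next
  case (Suc k)
  then obtain u' v' where uv: "u' \<in> t" "v' \<in> s" "col u' = col u - int k" "col v' = col u - int k"
    "height v' < height u'" by force
  have "u' \<noteq> st t" using uv Suc.prems by auto
  then obtain u'' where u'': "u'' \<in> t" "u' = NE u'' \<or> u' = SE u''" using tile_props(6)[OF tt] uv by blast
  have "v' \<noteq> st s" using uv Suc.prems by auto
  then obtain v'' where v'': "v'' \<in> s" "v' = NE v'' \<or> v' = SE v''" using tile_props(6)[OF ts] uv by blast
  have "u'' \<noteq> v''" using u'' v'' disj by auto
  then have "height v'' < height u''" using step_pair2[OF _ uv(5) u''(2) v''(2)] uv by auto
  moreover have "col u'' = col u - int (Suc k)" "col v'' = col u - int (Suc k)"
    using u'' v'' uv by auto
  ultimately show ?case using u'' v'' by blast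
qed

lemma noncross_right:
  assumes tt: "is_tile t" and ts: "is_tile s" and disj: "t \<inter> s = {}"
    and u: "u \<in> t" and v: "v \<in> s" and c: "col u = col v" and h: "height v < height u"
  shows "col u + int k \<le> col (en t) \<Longrightarrow> col u + int k \<le> col (en s) \<Longrightarrow>
    \<exists>u'\<in>t. \<exists>v'\<in>s. col u' = col u + int k \<and> col v' = col u + int k \<and> height v' < height u'"
proof (induction k)
  case 0 then show ?case using u v c h by auto
next
  case (Suc k)
  then obtain u' v' where uv: "u' \<in> t" "v' \<in> s" "col u' = col u + int k" "col v' = col u + int k"
    "height v' < height u'" by force
  have "u' \<noteq> en t" using uv Suc.prems by auto
  then obtain u'' where u'': "u'' \<in> t" "u'' = NE u' \<or> u'' = SE u'" using tile_props(7)[OF tt] uv by blast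
  have "v' \<noteq> en s" using uv Suc.prems by auto
  then obtain v'' where v'': "v'' \<in> s" "v'' = NE v' \<or> v'' = SE v'" using tile_props(7)[OF ts] uv by blast
  have "u'' \<noteq> v''" using u'' v'' disj by auto
  moreover have "u' \<noteq> v'" using uv disj by auto
  ultimately have "height v'' < height u''" using step_pair[OF _ uv(5) _ u''(2) v''(2)] uv by auto
  moreover have "col u'' = col u + int (Suc k)" "col v'' = col u + int (Suc k)"
    using u'' v'' uv by auto
  ultimately show ?case using u'' v'' by blast
qed


lemma tile_of_eq:
  assumes "is_dyck_tiling T lam mu" "t \<in> T" "n \<in> t"
  shows "tile_of T n = t"
  unfolding tile_of_def
  apply (rule the_equality)
  using assms unfolding is_dyck_tiling_def by blast+

lemma tile_ex:
  assumes "is_dyck_tiling T lam mu" "n \<in> lam - mu"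
  shows "\<exists>t\<in>T. n \<in> t"
  using assms unfolding is_dyck_tiling_def by auto

lemma tiling_tile: "is_dyck_tiling T lam mu \<Longrightarrow> t \<in> T \<Longrightarrow> is_tile t"
  unfolding is_dyck_tiling_def is_dyck_tile_def by auto

lemma tiling_sub: "is_dyck_tiling T lam mu \<Longrightarrow> t \<in> T \<Longrightarrow> t \<subseteq> lam - mu"
  unfolding is_dyck_tiling_def by auto

lemma tiling_disj: "is_dyck_tiling T lam mu \<Longrightarrow> t \<in> T \<Longrightarrow> s \<in> T \<Longrightarrow> t \<noteq> s \<Longrightarrow> t \<inter> s = {}"
  unfolding is_dyck_tiling_def by auto

lemma part_pos: "is_partition P \<Longrightarrow> (a,b) \<in> P \<Longrightarrow> 1 \<le> a \<and> 1 \<le> b"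
  unfolding is_partition_def by auto

lemma part_down: "is_partition P \<Longrightarrow> (a,b) \<in> P \<Longrightarrow> 1 \<le> a' \<Longrightarrow> a' \<le> a \<Longrightarrow> 1 \<le> b' \<Longrightarrow> b' \<le> b \<Longrightarrow> (a',b') \<in> P"
  unfolding is_partition_def by blast

theorem proposition4p1:
  assumes "is_partition lam" and "is_partition mu" and "mu \<subseteq> lam"
    and "is_dyck_tiling T lam mu"
  shows "(left_cover_expansive T lam mu \<longleftrightarrow> (\<forall>t\<in>T. NW (st t) \<notin> lam - mu))
       \<and> (right_cover_expansive T lam mu \<longleftrightarrow> (\<forall>t\<in>T. NE (en t) \<notin> lam - mu))"
proof (intro conjI iffI)
  note D = assms(4)
  show "\<forall>t\<in>T. NW (st t) \<notin> lam - mu" if L: "left_cover_expansive T lam mu"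
  proof (intro ballI notI)
    fix t assume t: "t \<in> T" and a: "NW (st t) \<in> lam - mu"
    have tt: "is_tile t" using tiling_tile[OF D t] .
    have sst: "st t \<in> lam - mu" using tile_props(1)[OF tt] tiling_sub[OF D t] by auto
    have se: "SE (NW (st t)) = st t" by (simp add: SE_def NW_def)
    obtain t' where t': "t' \<in> T" "NW (st t) \<in> t'" using tile_ex[OF D a] by blast
    have "col (st (tile_of T (st t))) \<le> col (st (tile_of T (NW (st t))))"
      using L a sst se unfolding left_cover_expansive_def by metis
    then have "col (st t) \<le> col (st t')"
      using tile_of_eq[OF D t tile_props(1)[OF tt]] tile_of_eq[OF D t'] by simp
    moreover have "col (st t') \<le> col (NW (st t))" using tile_props(3)[OF tiling_tile[OF D t'(1)]] t' by auto
    ultimately show False by (simp add: col_def NW_def)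
  qed
  show "\<forall>t\<in>T. NE (en t) \<notin> lam - mu" if R: "right_cover_expansive T lam mu"
  proof (intro ballI notI)
    fix t assume t: "t \<in> T" and a: "NE (en t) \<in> lam - mu"
    have tt: "is_tile t" using tiling_tile[OF D t] .
    have sst: "en t \<in> lam - mu" using tile_props(2)[OF tt] tiling_sub[OF D t] by auto
    have se: "SW (NE (en t)) = en t" by (simp add: SW_def NE_def)
    obtain t' where t': "t' \<in> T" "NE (en t) \<in> t'" using tile_ex[OF D a] by blast
    have "col (en (tile_of T (NE (en t)))) \<le> col (en (tile_of T (en t)))"
      using R a sst se unfolding right_cover_expansive_def by metis
    then have "col (en t') \<le> col (en t)"
      using tile_of_eq[OF D t tile_props(2)[OF tt]] tile_of_eq[OF D t'] by simp
    moreover have "col (NE (en t)) \<le> col (en t')" using tile_props(4)[OF tiling_tile[OF D t'(1)]] t' by auto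
    ultimately show False by simp
  qed
  show "left_cover_expansive T lam mu" if H: "\<forall>t\<in>T. NW (st t) \<notin> lam - mu"
    unfolding left_cover_expansive_def
  proof (intro allI impI)
    fix a assume aa: "a \<in> lam - mu \<and> SE a \<in> lam - mu"
    obtain t where t: "t \<in> T" "a \<in> t" using tile_ex[OF D] aa by blast
    obtain s where s: "s \<in> T" "SE a \<in> s" using tile_ex[OF D] aa by blast
    have tt: "is_tile t" using tiling_tile[OF D t(1)] .
    have ts: "is_tile s" using tiling_tile[OF D s(1)] .
    have eqs: "tile_of T a = t" "tile_of T (SE a) = s" using tile_of_eq[OF D] t s by auto
    show "col (st (tile_of T (SE a))) \<le> col (st (tile_of T a))"
    proof (rule ccontr)
      assume "\<not> ?thesis"
      then have lt: "col (st t) < col (st s)" using eqs by simp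
      then have ne: "s \<noteq> t" by auto
      have disj: "t \<inter> s = {}" using tiling_disj[OF D t(1) s(1)] ne by auto
      have "SE a \<noteq> st s"
      proof
        assume "SE a = st s"
        then have "NW (st s) = a" by (metis NW_def SE_def fst_conv snd_conv diff_add_cancel prod.collapse)
        then show False using H s aa by auto
      qed
      then obtain v0 where v0: "v0 \<in> s" "SE a = NE v0 \<or> SE a = SE v0" using tile_props(6)[OF ts] s by blast
      have "SE a \<noteq> SE v0"
      proof
        assume "SE a = SE v0"
        then have "a = v0" by (simp add: SE_def prod_eq_iff)
        then show False using t v0 disj by auto
      qed
      then have v0e: "SE a = NE v0" using v0 by auto
      then have cv: "col a = col v0" and hv: "height v0 < height a"
        by (cases a; cases v0; auto simp: SE_def NE_def col_def height_def)+
      define k where "k = nat (col a - col (st s))"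
      have cvs: "col (st s) \<le> col v0" using tile_props(3)[OF ts] v0 by auto
      have kk: "col a - int k = col (st s)" using k_def cvs cv by simp
      obtain u' v' where uv: "u' \<in> t" "v' \<in> s" "col u' = col (st s)" "col v' = col (st s)"
        "height v' < height u'"
        using noncross_left[OF tt ts disj t(2) v0(1) cv hv, of k] kk lt by auto
      have v'e: "v' = st s" using inj_onD[OF tile_props(5)[OF ts]] uv tile_props(1)[OF ts] by auto
      have "u' \<noteq> st t" using uv lt by auto
      then obtain u'' where u'': "u'' \<in> t" "u' = NE u'' \<or> u' = SE u''" using tile_props(6)[OF tt] uv by blast
      obtain x y where xy: "st s = (x,y)" by fastforce
      obtain p q where pq: "u'' = (p,q)" by fastforce
      have stl: "st s \<in> lam - mu" using tile_props(1)[OF ts] tiling_sub[OF D s(1)] by auto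
      have ul: "u'' \<in> lam" using u'' tiling_sub[OF D t(1)] by auto
      have pos: "1 \<le> x" "1 \<le> y" using part_pos[OF assms(1)] stl xy by auto
      have ineq: "x + 1 \<le> p \<and> y \<le> q"
        using u''(2) uv(3,5) v'e xy pq by (auto simp: NE_def SE_def col_def height_def)
      have "(x+1, y) \<in> lam" using part_down[OF assms(1)] ul pq ineq pos by auto
      moreover have "(x+1, y) \<notin> mu"
      proof
        assume "(x+1, y) \<in> mu"
        then have "(x,y) \<in> mu" using part_down[OF assms(2)] pos by fastforce
        then show False using stl xy by auto
      qed
      ultimately have "NW (st s) \<in> lam - mu" using xy by (simp add: NW_def)
      then show False using H s by auto
    qed
  qed
  show "right_cover_expansive T lam mu" if H: "\<forall>t\<in>T. NE (en t) \<notin> lam - mu"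
    unfolding right_cover_expansive_def
  proof (intro allI impI)
    fix a assume aa: "a \<in> lam - mu \<and> SW a \<in> lam - mu"
    obtain t where t: "t \<in> T" "a \<in> t" using tile_ex[OF D] aa by blast
    obtain s where s: "s \<in> T" "SW a \<in> s" using tile_ex[OF D] aa by blast
    have tt: "is_tile t" using tiling_tile[OF D t(1)] .
    have ts: "is_tile s" using tiling_tile[OF D s(1)] .
    have eqs: "tile_of T a = t" "tile_of T (SW a) = s" using tile_of_eq[OF D] t s by auto
    show "col (en (tile_of T a)) \<le> col (en (tile_of T (SW a)))"
    proof (rule ccontr)
      assume "\<not> ?thesis"
      then have lt: "col (en s) < col (en t)" using eqs by simp
      then have ne: "s \<noteq> t" by auto
      have disj: "t \<inter> s = {}" using tiling_disj[OF D t(1) s(1)] ne by auto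
      have "SW a \<noteq> en s"
      proof
        assume "SW a = en s"
        then have "NE (en s) = a" by (metis NE_def SW_def fst_conv snd_conv diff_add_cancel prod.collapse)
        then show False using H s aa by auto
      qed
      then obtain v0 where v0: "v0 \<in> s" "v0 = NE (SW a) \<or> v0 = SE (SW a)" using tile_props(7)[OF ts] s by blast
      have "v0 \<noteq> NE (SW a)"
      proof
        assume "v0 = NE (SW a)"
        then have "a = v0" by (simp add: SW_def NE_def)
        then show False using t v0 disj by auto
      qed
      then have v0e: "v0 = SE (SW a)" using v0 by auto
      then have cv: "col a = col v0" and hv: "height v0 < height a"
        by (cases a; auto simp: SE_def SW_def col_def height_def)+
      define k where "k = nat (col (en s) - col a)"
      have cvs: "col v0 \<le> col (en s)" using tile_props(4)[OF ts] v0 by auto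
      have kk: "col a + int k = col (en s)" using k_def cvs cv by simp
      obtain u' v' where uv: "u' \<in> t" "v' \<in> s" "col u' = col (en s)" "col v' = col (en s)"
        "height v' < height u'"
        using noncross_right[OF tt ts disj t(2) v0(1) cv hv, of k] kk lt by auto
      have v'e: "v' = en s" using inj_onD[OF tile_props(5)[OF ts]] uv tile_props(2)[OF ts] by auto
      have "u' \<noteq> en t" using uv lt by auto
      then obtain u'' where u'': "u'' \<in> t" "u'' = NE u' \<or> u'' = SE u'" using tile_props(7)[OF tt] uv by blast
      obtain x y where xy: "en s = (x,y)" by fastforce
      obtain p q where pq: "u' = (p,q)" by fastforce
      have stl: "en s \<in> lam - mu" using tile_props(2)[OF ts] tiling_sub[OF D s(1)] by auto
      have ul: "u'' \<in> lam" using u'' tiling_sub[OF D t(1)] by auto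
      have pos: "1 \<le> x" "1 \<le> y" using part_pos[OF assms(1)] stl xy by auto
      have ineq: "x \<le> fst u'' \<and> y + 1 \<le> snd u''"
        using u''(2) uv(3,5) v'e xy pq by (auto simp: NE_def SE_def col_def height_def)
      have "(x, y+1) \<in> lam" using part_down[OF assms(1), of "fst u''" "snd u''"] ul ineq pos by auto
      moreover have "(x, y+1) \<notin> mu"
      proof
        assume "(x, y+1) \<in> mu"
        then have "(x,y) \<in> mu" using part_down[OF assms(2)] pos by fastforce
        then show False using stl xy by auto
      qed
      ultimately have "NE (en s) \<in> lam - mu" using xy by (simp add: NE_def)
      then show False using H s by auto
    qed
  qed
qed

end
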